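(* Let $T,R,K>0$, $I\ge2$, and let the data $a_i,b_i,c_i,f_i\in W^{1,\infty}([0,T]\times[0,R]\times[0,K])$, $\alpha_i\in W^{1,\infty}([0,T]\times[0,K],\mathbb{R}_+)$, $r\in W^{1,\infty}([0,T]\times[0,K],\mathbb{R}_+)$, $\phi\in W^{1,\infty}([0,T]\times[0,K])$, $\psi$, $g$ satisfy the assumptions listed in the context (in particular $a_i\ge\underline{a}>0$, $\alpha_i\ge\underline{\alpha}>0$, $r\ge0$). Let $u,v\in\mathfrak{C}^{1,2,0}_{\{0\}}(\Omega_T)$ where $u$ is a super solution and $v$ a sub solution, i.e. for all $i$: $$\partial_tu_i-a_i\partial_x^2u_i+b_i\partial_xu_i+c_iu_i-f_i\ge0\ (\text{resp. for }v:\le 0)\ \text{on }(0,T)\times(0,R)\times(0,K),$$ $$\partial_lu(t,0,l)+\sum_{i=1}^I\alpha_i(t,l)\partial_xu_i(t,0,l)-r(t,l)u(t,0,l)-\phi(t,l)\le0\ (\text{resp. for }v:\ge0),\quad (t,l)\in(0,T)\times(0,K),$$ $$\partial_xu_i(t,R,l)\ge0\ (\text{resp. for }v:\le0),\quad (t,l)\in(0,T)\times(0,K).$$ Assume moreover that $u_i(0,x,l)\ge v_i(0,x,l)$ and $u_i(t,x,K)\ge v_i(t,x,K)$ for all $i\in\{1,\dots,I\}$, $t\in[0,T]$, $x\in[0,R]$, $l\in[0,K]$. Then $u_i(t,x,l)\ge v_i(t,x,l)$ for all $i$ and all $(t,x,l)\in[0,T]\times[0,R]\times[0,K]$.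
   Context: $\mathcal{N}_R$ is the star network of $I$ copies of $[0,R]$ glued at $0$; a function on $[0,T]\times\mathcal{N}_R\times[0,K]$ is a family $(h_i)_{i=1}^I$, $h_i:[0,T]\times[0,R]\times[0,K]\to\mathbb{R}$, with $h_i(t,0,l)=h_j(t,0,l)=:h(t,0,l)$. $\Omega_T=(0,T)\times\mathring{\mathcal{N}}_R\times(0,K)$. The class $\mathfrak{C}^{1,2,0}_{\{0\}}(\Omega_T)$ consists of such families that are continuous at the junction, with each $h_i$ continuous on $[0,T]\times[0,R]\times[0,K]$ and continuously differentiable in $x$ on $[0,T]\times[0,R]\times[0,K)$, of class $\mathcal{C}^{1,2,0}$ (one continuous $t$-derivative, two continuous $x$-derivatives) on $(0,T)\times(0,R)\times(0,K)$ with $\partial_th_i,\partial_x^2h_i$ bounded there, with $(t,l)\mapsto h(t,0,l)$ in $\mathcal{C}^{0,1}([0,T]\times[0,K))$ (continuously differentiable in $l$), and with each $h_i$ having a generalized $l$-derivative in $\bigcap_{q\in(1,\infty)}L^q$. Standing assumption on the data (called $(\mathcal{H})$ in the paper): $a_i\ge\underline{a}>0$, $\alpha_i\ge\underline{\alpha}>0$; $\psi$ continuous on $[0,T]\times\mathcal{N}_R$, $\mathcal{C}^{0,1}$ on each closed ray and $\mathcal{C}^{1,2}$ inside; $g=(g_i)$ Lipschitz, continuous at the junction, twice differentiable in $x$, with $l\mapsto g(0,l)$ differentiable; compatibility: $\partial_lg(0,l)+\sum_i\alpha_i(0,l)\partial_xg_i(0,l)-r(0,l)g(0,l)=\phi(0,l)$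 for $l\in[0,K)$, $\partial_xg_i(R,l)=0$ for $l\in[0,K)$, $g_i(x,K)=\psi_i(0,x)$. *)

theory Defs
  imports "HOL-Analysis.Analysis"
begin

text \<open>A function on [0,T] x N_R x [0,K] is a family h :: nat => real => real => real => real,
  the branch h i being a function of (t,x,l); branches are indexed by i in {1..I}.\<close>

definition Dt :: "(real \<Rightarrow> real \<Rightarrow> real \<Rightarrow> real) \<Rightarrow> real \<Rightarrow> real \<Rightarrow> real \<Rightarrow> real \<Rightarrow> real" where
  "Dt h T t x l = vector_derivative (\<lambda>s. h s x l) (at t within {0..T})"

definition Dx :: "(real \<Rightarrow> real \<Rightarrow> real \<Rightarrow> real) \<Rightarrow> real \<Rightarrow> real \<Rightarrow> real \<Rightarrow> real \<Rightarrow> real" where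
  "Dx h R t x l = vector_derivative (\<lambda>y. h t y l) (at x within {0..R})"

definition Dxx :: "(real \<Rightarrow> real \<Rightarrow> real \<Rightarrow> real) \<Rightarrow> real \<Rightarrow> real \<Rightarrow> real \<Rightarrow> real \<Rightarrow> real" where
  "Dxx h R t x l = vector_derivative (\<lambda>y. Dx h R t y l) (at x within {0..R})"

definition Dl :: "(real \<Rightarrow> real \<Rightarrow> real \<Rightarrow> real) \<Rightarrow> real \<Rightarrow> real \<Rightarrow> real \<Rightarrow> real \<Rightarrow> real" where
  "Dl h K t x l = vector_derivative (\<lambda>m. h t x m) (at l within {0..K})"

definition box3 :: "real \<Rightarrow> real \<Rightarrow> real \<Rightarrow> (real \<times> real \<times> real) set" where
  "box3 T R K = {0..T} \<times> {0..R} \<times> {0..K}"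

definition obox3 :: "real \<Rightarrow> real \<Rightarrow> real \<Rightarrow> (real \<times> real \<times> real) set" where
  "obox3 T R K = {0<..<T} \<times> {0<..<R} \<times> {0<..<K}"

text \<open>w is a generalized (weak) derivative of h with respect to the third variable l on the
  open set S: tested against compactly supported continuous functions with continuous
  l-derivative (by mollification this is equivalent to testing against C_c^infinity).\<close>

definition weak_dl :: "(real \<times> real \<times> real \<Rightarrow> real) \<Rightarrow> (real \<times> real \<times> real \<Rightarrow> real)
    \<Rightarrow> (real \<times> real \<times> real) set \<Rightarrow> bool" where
  "weak_dl h w S \<longleftrightarrow>
     (\<forall>\<phi> \<phi>l. (continuous_on UNIV \<phi> \<and> compact (closure {p. \<phi> p \<noteq> 0})
               \<and> closure {p. \<phi> p \<noteq> 0} \<subseteq> S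
               \<and> (\<forall>t x l. ((\<lambda>m. \<phi> (t, x, m)) has_real_derivative \<phi>l (t, x, l)) (at l))
               \<and> continuous_on UNIV \<phi>l)
        \<longrightarrow> (LINT p:S|lborel. h p * \<phi>l p) = - (LINT p:S|lborel. w p * \<phi> p))"

definition in_all_Lq :: "(real \<times> real \<times> real \<Rightarrow> real) \<Rightarrow> (real \<times> real \<times> real) set \<Rightarrow> bool" where
  "in_all_Lq w S \<longleftrightarrow> w \<in> borel_measurable lborel \<and>
     (\<forall>q::real. 1 < q \<longrightarrow> set_integrable lborel S (\<lambda>p. \<bar>w p\<bar> powr q))"

definition C120 :: "nat \<Rightarrow> real \<Rightarrow> real \<Rightarrow> real \<Rightarrow> (nat \<Rightarrow> real \<Rightarrow> real \<Rightarrow> real \<Rightarrow> real) \<Rightarrow> bool" where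
  "C120 I T R K h \<longleftrightarrow>
    (\<forall>i\<in>{1..I}. \<forall>j\<in>{1..I}. \<forall>t\<in>{0..T}. \<forall>l\<in>{0..K}. h i t 0 l = h j t 0 l) \<and>
    (\<forall>i\<in>{1..I}.
       continuous_on (box3 T R K) (\<lambda>(t, x, l). h i t x l) \<and>
       (\<forall>t\<in>{0..T}. \<forall>x\<in>{0..R}. \<forall>l\<in>{0..<K}.
          ((\<lambda>y. h i t y l) has_real_derivative Dx (h i) R t x l) (at x within {0..R})) \<and>
       continuous_on ({0..T} \<times> {0..R} \<times> {0..<K}) (\<lambda>(t, x, l). Dx (h i) R t x l) \<and>
       (\<forall>t\<in>{0<..<T}. \<forall>x\<in>{0<..<R}. \<forall>l\<in>{0<..<K}.
          ((\<lambda>s. h i s x l) has_real_derivative Dt (h i) T t x l) (at t) \<and>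
          ((\<lambda>y. Dx (h i) R t y l) has_real_derivative Dxx (h i) R t x l) (at x)) \<and>
       continuous_on (obox3 T R K) (\<lambda>(t, x, l). Dt (h i) T t x l) \<and>
       continuous_on (obox3 T R K) (\<lambda>(t, x, l). Dx (h i) R t x l) \<and>
       continuous_on (obox3 T R K) (\<lambda>(t, x, l). Dxx (h i) R t x l) \<and>
       bounded ((\<lambda>(t, x, l). Dt (h i) T t x l) ` obox3 T R K) \<and>
       bounded ((\<lambda>(t, x, l). Dxx (h i) R t x l) ` obox3 T R K) \<and>
       (\<exists>w. in_all_Lq w (obox3 T R K) \<and>
            weak_dl (\<lambda>(t, x, l). h i t x l) w (obox3 T R K))) \<and>
    continuous_on ({0..T} \<times> {0..K}) (\<lambda>(t, l). h 1 t 0 l) \<and>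
    (\<forall>t\<in>{0..T}. \<forall>l\<in>{0..<K}.
       ((\<lambda>m. h 1 t 0 m) has_real_derivative Dl (h 1) K t 0 l) (at l within {0..K})) \<and>
    continuous_on ({0..T} \<times> {0..<K}) (\<lambda>(t, l). Dl (h 1) K t 0 l)"

text \<open>W^{1,infinity} on a compact box is identified with (continuous representatives that are)
  Lipschitz functions.\<close>

definition W1inf3 :: "(real \<Rightarrow> real \<Rightarrow> real \<Rightarrow> real) \<Rightarrow> (real \<times> real \<times> real) set \<Rightarrow> bool" where
  "W1inf3 h S \<longleftrightarrow> (\<exists>C. C-lipschitz_on S (\<lambda>(t, x, l). h t x l))"

definition W1inf2 :: "(real \<Rightarrow> real \<Rightarrow> real) \<Rightarrow> (real \<times> real) set \<Rightarrow> bool" where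
  "W1inf2 h S \<longleftrightarrow> (\<exists>C. C-lipschitz_on S (\<lambda>(t, l). h t l))"

end

theory Submission
  imports Defs "HOL-Analysis.Analysis"
begin

lemma deriv_right_max:
  fixes f :: "real \<Rightarrow> real"
  assumes "(f has_real_derivative D) (at x within {x..b})" "x < b"
    "\<And>y. x \<le> y \<Longrightarrow> y \<le> b \<Longrightarrow> f y \<le> f x"
  shows "D \<le> 0"
proof -
  have "((\<lambda>y. (f y - f x) / (y - x)) \<longlongrightarrow> D) (at x within {x..b})"
    using assms(1) by (simp add: has_field_derivative_iff)
  hence lim: "((\<lambda>y. (f y - f x) / (y - x)) \<longlongrightarrow> D) (at_right x)"
    using at_within_Icc_at_right[OF assms(2)] by simp
  have ev: "eventually (\<lambda>y. (f y - f x) / (y - x) \<le> 0) (at_right x)"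
    unfolding eventually_at_right_field using assms(2,3)
    by (intro exI[of _ b]) (auto intro!: divide_nonpos_pos)
  show ?thesis using tendsto_upperbound[OF lim ev] by simp
qed

lemma deriv_left_max:
  fixes f :: "real \<Rightarrow> real"
  assumes "(f has_real_derivative D) (at x within {a..x})" "a < x"
    "\<And>y. a \<le> y \<Longrightarrow> y \<le> x \<Longrightarrow> f y \<le> f x"
  shows "D \<ge> 0"
proof -
  have "((\<lambda>y. (f y - f x) / (y - x)) \<longlongrightarrow> D) (at x within {a..x})"
    using assms(1) by (simp add: has_field_derivative_iff)
  hence lim: "((\<lambda>y. (f y - f x) / (y - x)) \<longlongrightarrow> D) (at_left x)"
    using at_within_Icc_at_left[OF assms(2)] by simp
  have ev: "eventually (\<lambda>y. 0 \<le> (f y - f x) / (y - x)) (at_left x)"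
    unfolding eventually_at_left_field using assms(2,3)
    by (intro exI[of _ a]) (auto intro!: divide_nonpos_neg)
  show ?thesis using tendsto_lowerbound[OF lim ev] by simp
qed

lemma second_deriv_max:
  fixes f f' :: "real \<Rightarrow> real"
  assumes "a < x0" "x0 < b" "\<And>y. a < y \<Longrightarrow> y < b \<Longrightarrow> (f has_real_derivative f' y) (at y)"
    "(f' has_real_derivative D) (at x0)" "f' x0 = 0" "\<And>y. a < y \<Longrightarrow> y < b \<Longrightarrow> f y \<le> f x0"
  shows "D \<le> 0"
proof (rule ccontr)
  assume "\<not> D \<le> 0" hence D: "D > 0" by simp
  have "(f' has_real_derivative D) (at x0 within {x0<..})"
    using assms(4) by (rule has_field_derivative_at_within)
  hence "((\<lambda>y. (f' y - f' x0) / (y - x0)) \<longlongrightarrow> D) (at_right x0)"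
    by (simp add: has_field_derivative_iff)
  hence "eventually (\<lambda>y. 0 < (f' y - f' x0) / (y - x0)) (at_right x0)"
    using D order_tendstoD(1) by blast
  then obtain c where c: "c > x0" "\<forall>y>x0. y < c \<longrightarrow> 0 < (f' y - f' x0) / (y - x0)"
    by (auto simp: eventually_at_right_field)
  have pos: "f' y > 0" if "x0 < y" "y < c" for y
    using c(2) that assms(5) by (auto simp: zero_less_divide_iff)
  define y1 where "y1 = (x0 + min c b) / 2"
  have y1: "x0 < y1" "y1 < c" "y1 < b" using c(1) assms(2) by (auto simp: y1_def)
  obtain z where z: "x0 < z" "z < y1" "f y1 - f x0 = (y1 - x0) * f' z"
    using MVT2[of x0 y1 f f'] y1 assms(1,3) by force
  have "f y1 - f x0 > 0" using z y1 pos by simp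
  moreover have "f y1 \<le> f x0" using assms(6) y1 assms(1) by simp
  ultimately show False by simp
qed

lemma C120_D:
  assumes "C120 I T R K h"
  shows "\<forall>i\<in>{1..I}. \<forall>j\<in>{1..I}. \<forall>t\<in>{0..T}. \<forall>l\<in>{0..K}. h i t 0 l = h j t 0 l"
  and "\<forall>i\<in>{1..I}. continuous_on (box3 T R K) (\<lambda>(t, x, l). h i t x l)"
  and "\<forall>i\<in>{1..I}. \<forall>t\<in>{0..T}. \<forall>x\<in>{0..R}. \<forall>l\<in>{0..<K}.
          ((\<lambda>y. h i t y l) has_real_derivative Dx (h i) R t x l) (at x within {0..R})"
  and "\<forall>i\<in>{1..I}. \<forall>t\<in>{0<..<T}. \<forall>x\<in>{0<..<R}. \<forall>l\<in>{0<..<K}.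
          ((\<lambda>s. h i s x l) has_real_derivative Dt (h i) T t x l) (at t) \<and>
          ((\<lambda>y. Dx (h i) R t y l) has_real_derivative Dxx (h i) R t x l) (at x)"
  and "\<forall>t\<in>{0..T}. \<forall>l\<in>{0..<K}.
       ((\<lambda>m. h 1 t 0 m) has_real_derivative Dl (h 1) K t 0 l) (at l within {0..K})"
  using assms unfolding C120_def by blast+

lemma bound_from_cont:
  fixes h :: "nat \<Rightarrow> 'a::topological_space \<Rightarrow> real"
  assumes "compact S" "\<forall>i\<in>A. continuous_on S (h i)" "finite A"
  obtains M where "\<forall>i\<in>A. \<forall>q\<in>S. \<bar>h i q\<bar> \<le> M"
proof -
  have "continuous_on S (\<lambda>q. \<Sum>i\<in>A. \<bar>h i q\<bar>)"
    using assms(2) by (intro continuous_intros) auto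
  hence "compact ((\<lambda>q. \<Sum>i\<in>A. \<bar>h i q\<bar>) ` S)" using compact_continuous_image assms(1) by blast
  hence "bounded ((\<lambda>q. \<Sum>i\<in>A. \<bar>h i q\<bar>) ` S)" by (rule compact_imp_bounded)
  then obtain M where M: "\<forall>q\<in>S. \<bar>\<Sum>i\<in>A. \<bar>h i q\<bar>\<bar> \<le> M" unfolding bounded_real by auto
  have "\<bar>h i q\<bar> \<le> M" if "i \<in> A" "q \<in> S" for i q
  proof -
    have "\<bar>h i q\<bar> \<le> (\<Sum>i\<in>A. \<bar>h i q\<bar>)" using that assms(3) by (intro member_le_sum) auto
    also have "\<dots> \<le> M" using M that by auto
    finally show ?thesis .
  qed
  thus ?thesis using that by blast
qed

theorem theorem2p6:
  fixes I :: nat and T R K :: real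
    and a b c f :: "nat \<Rightarrow> real \<Rightarrow> real \<Rightarrow> real \<Rightarrow> real"
    and \<alpha> :: "nat \<Rightarrow> real \<Rightarrow> real \<Rightarrow> real"
    and r \<phi> :: "real \<Rightarrow> real \<Rightarrow> real"
    and \<psi> :: "nat \<Rightarrow> real \<Rightarrow> real \<Rightarrow> real"
    and g :: "nat \<Rightarrow> real \<Rightarrow> real \<Rightarrow> real"
    and u v :: "nat \<Rightarrow> real \<Rightarrow> real \<Rightarrow> real \<Rightarrow> real"
    and a_low \<alpha>_low :: real
  assumes T: "T > 0" and R: "R > 0" and K: "K > 0" and I: "I \<ge> 2"
    (* regularity of the data *)
    and a_reg: "\<forall>i\<in>{1..I}. W1inf3 (a i) (box3 T R K)"
    and b_reg: "\<forall>i\<in>{1..I}. W1inf3 (b i) (box3 T R K)"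
    and c_reg: "\<forall>i\<in>{1..I}. W1inf3 (c i) (box3 T R K)"
    and f_reg: "\<forall>i\<in>{1..I}. W1inf3 (f i) (box3 T R K)"
    and \<alpha>_reg: "\<forall>i\<in>{1..I}. W1inf2 (\<alpha> i) ({0..T} \<times> {0..K})"
    and r_reg: "W1inf2 r ({0..T} \<times> {0..K})"
    and \<phi>_reg: "W1inf2 \<phi> ({0..T} \<times> {0..K})"
    and r_nonneg: "\<forall>t\<in>{0..T}. \<forall>l\<in>{0..K}. r t l \<ge> 0"
    (* ellipticity / junction coefficients *)
    and a_low: "a_low > 0" "\<forall>i\<in>{1..I}. \<forall>t\<in>{0..T}. \<forall>x\<in>{0..R}. \<forall>l\<in>{0..K}. a i t x l \<ge> a_low"
    and \<alpha>_low: "\<alpha>_low > 0" "\<forall>i\<in>{1..I}. \<forall>t\<in>{0..T}. \<forall>l\<in>{0..K}. \<alpha> i t l \<ge> \<alpha>_low"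
    (* assumptions on \<psi> *)
    and \<psi>_junc: "\<forall>i\<in>{1..I}. \<forall>j\<in>{1..I}. \<forall>t\<in>{0..T}. \<psi> i t 0 = \<psi> j t 0"
    and \<psi>_reg: "\<forall>i\<in>{1..I}.
        continuous_on ({0..T} \<times> {0..R}) (\<lambda>(t, x). \<psi> i t x) \<and>
        (\<forall>t\<in>{0..T}. \<forall>x\<in>{0..R}. ((\<lambda>y. \<psi> i t y) has_real_derivative
            vector_derivative (\<lambda>y. \<psi> i t y) (at x within {0..R})) (at x within {0..R})) \<and>
        continuous_on ({0..T} \<times> {0..R}) (\<lambda>(t, x). vector_derivative (\<lambda>y. \<psi> i t y) (at x within {0..R})) \<and>
        (\<forall>t\<in>{0<..<T}. \<forall>x\<in>{0<..<R}.
            ((\<lambda>s. \<psi> i s x) has_real_derivative deriv (\<lambda>s. \<psi> i s x) t) (at t) \<and>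
            ((\<lambda>y. \<psi> i t y) has_real_derivative deriv (\<lambda>y. \<psi> i t y) x) (at x) \<and>
            (deriv (\<lambda>y. \<psi> i t y) has_real_derivative deriv (deriv (\<lambda>y. \<psi> i t y)) x) (at x)) \<and>
        continuous_on ({0<..<T} \<times> {0<..<R}) (\<lambda>(t, x). deriv (\<lambda>s. \<psi> i s x) t) \<and>
        continuous_on ({0<..<T} \<times> {0<..<R}) (\<lambda>(t, x). deriv (\<lambda>y. \<psi> i t y) x) \<and>
        continuous_on ({0<..<T} \<times> {0<..<R}) (\<lambda>(t, x). deriv (deriv (\<lambda>y. \<psi> i t y)) x)"
    (* assumptions on g *)
    and g_lip: "\<forall>i\<in>{1..I}. \<exists>C. C-lipschitz_on ({0..R} \<times> {0..K}) (\<lambda>(x, l). g i x l)"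
    and g_junc: "\<forall>i\<in>{1..I}. \<forall>j\<in>{1..I}. \<forall>l\<in>{0..K}. g i 0 l = g j 0 l"
    and g_dx: "\<forall>i\<in>{1..I}. \<forall>x\<in>{0..R}. \<forall>l\<in>{0..K}.
        ((\<lambda>y. g i y l) has_real_derivative vector_derivative (\<lambda>y. g i y l) (at x within {0..R}))
          (at x within {0..R}) \<and>
        ((\<lambda>z. vector_derivative (\<lambda>y. g i y l) (at z within {0..R})) has_real_derivative
          vector_derivative (\<lambda>z. vector_derivative (\<lambda>y. g i y l) (at z within {0..R})) (at x within {0..R}))
          (at x within {0..R})"
    and g_dl: "\<forall>l\<in>{0..K}. ((\<lambda>m. g 1 0 m) has_real_derivative
        vector_derivative (\<lambda>m. g 1 0 m) (at l within {0..K})) (at l within {0..K})"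
    and g_compat0: "\<forall>l\<in>{0..<K}.
        vector_derivative (\<lambda>m. g 1 0 m) (at l within {0..K})
        + (\<Sum>i=1..I. \<alpha> i 0 l * vector_derivative (\<lambda>y. g i y l) (at 0 within {0..R}))
        - r 0 l * g 1 0 l = \<phi> 0 l"
    and g_compatR: "\<forall>i\<in>{1..I}. \<forall>l\<in>{0..<K}. vector_derivative (\<lambda>y. g i y l) (at R within {0..R}) = 0"
    and g_compatK: "\<forall>i\<in>{1..I}. \<forall>x\<in>{0..R}. g i x K = \<psi> i 0 x"
    (* u super solution, v sub solution *)
    and u_reg: "C120 I T R K u" and v_reg: "C120 I T R K v"
    and u_pde: "\<forall>i\<in>{1..I}. \<forall>t\<in>{0<..<T}. \<forall>x\<in>{0<..<R}. \<forall>l\<in>{0<..<K}.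
        Dt (u i) T t x l - a i t x l * Dxx (u i) R t x l + b i t x l * Dx (u i) R t x l
        + c i t x l * u i t x l - f i t x l \<ge> 0"
    and v_pde: "\<forall>i\<in>{1..I}. \<forall>t\<in>{0<..<T}. \<forall>x\<in>{0<..<R}. \<forall>l\<in>{0<..<K}.
        Dt (v i) T t x l - a i t x l * Dxx (v i) R t x l + b i t x l * Dx (v i) R t x l
        + c i t x l * v i t x l - f i t x l \<le> 0"
    and u_junc: "\<forall>t\<in>{0<..<T}. \<forall>l\<in>{0<..<K}.
        Dl (u 1) K t 0 l + (\<Sum>i=1..I. \<alpha> i t l * Dx (u i) R t 0 l) - r t l * u 1 t 0 l - \<phi> t l \<le> 0"
    and v_junc: "\<forall>t\<in>{0<..<T}. \<forall>l\<in>{0<..<K}.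
        Dl (v 1) K t 0 l + (\<Sum>i=1..I. \<alpha> i t l * Dx (v i) R t 0 l) - r t l * v 1 t 0 l - \<phi> t l \<ge> 0"
    and u_R: "\<forall>i\<in>{1..I}. \<forall>t\<in>{0<..<T}. \<forall>l\<in>{0<..<K}. Dx (u i) R t R l \<ge> 0"
    and v_R: "\<forall>i\<in>{1..I}. \<forall>t\<in>{0<..<T}. \<forall>l\<in>{0<..<K}. Dx (v i) R t R l \<le> 0"
    and init: "\<forall>i\<in>{1..I}. \<forall>x\<in>{0..R}. \<forall>l\<in>{0..K}. u i 0 x l \<ge> v i 0 x l"
    and final: "\<forall>i\<in>{1..I}. \<forall>t\<in>{0..T}. \<forall>x\<in>{0..R}. u i t x K \<ge> v i t x K"
  shows "\<forall>i\<in>{1..I}. \<forall>t\<in>{0..T}. \<forall>x\<in>{0..R}. \<forall>l\<in>{0..K}. u i t x l \<ge> v i t x l"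
proof -
  note uJ = C120_D(1)[OF u_reg] and uC = C120_D(2)[OF u_reg] and uDx = C120_D(3)[OF u_reg]
    and uDt = C120_D(4)[OF u_reg] and uDl = C120_D(5)[OF u_reg]
  note vJ = C120_D(1)[OF v_reg] and vC = C120_D(2)[OF v_reg] and vDx = C120_D(3)[OF v_reg]
    and vDt = C120_D(4)[OF v_reg] and vDl = C120_D(5)[OF v_reg]
  have fin: "finite {1..I}" by simp
  have I1: "1 \<in> {1..I}" using I by simp
  have cpt3: "compact (box3 T R K)" unfolding box3_def by (intro compact_Times compact_Icc)
  have cpt2: "compact ({0..T} \<times> {0..K})" by (intro compact_Times compact_Icc)
  have bC: "\<forall>i\<in>{1..I}. continuous_on (box3 T R K) (\<lambda>(t,x,l). b i t x l)"
    using b_reg unfolding W1inf3_def by (meson lipschitz_on_continuous_on)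
  obtain B where B: "\<forall>i\<in>{1..I}. \<forall>q\<in>box3 T R K. \<bar>(\<lambda>(t,x,l). b i t x l) q\<bar> \<le> B"
    using bound_from_cont[OF cpt3 bC fin] by blast
  have Bb: "\<bar>b i t x l\<bar> \<le> B" if "i\<in>{1..I}" "t\<in>{0..T}" "x\<in>{0..R}" "l\<in>{0..K}" for i t x l
    using B that unfolding box3_def by fastforce
  have B0: "B \<ge> 0" using Bb[OF I1, of 0 0 0] T R K by fastforce
  have cC: "\<forall>i\<in>{1..I}. continuous_on (box3 T R K) (\<lambda>(t,x,l). c i t x l)"
    using c_reg unfolding W1inf3_def by (meson lipschitz_on_continuous_on)
  obtain Cc where Cc: "\<forall>i\<in>{1..I}. \<forall>q\<in>box3 T R K. \<bar>(\<lambda>(t,x,l). c i t x l) q\<bar> \<le> Cc"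
    using bound_from_cont[OF cpt3 cC fin] by blast
  have Ccb: "\<bar>c i t x l\<bar> \<le> Cc" if "i\<in>{1..I}" "t\<in>{0..T}" "x\<in>{0..R}" "l\<in>{0..K}" for i t x l
    using Cc that unfolding box3_def by fastforce
  have aC: "\<forall>i\<in>{1..I}. continuous_on ({0..T} \<times> {0..K}) (\<lambda>(t,l). \<alpha> i t l)"
    using \<alpha>_reg unfolding W1inf2_def by (meson lipschitz_on_continuous_on)
  obtain A where A: "\<forall>i\<in>{1..I}. \<forall>q\<in>{0..T} \<times> {0..K}. \<bar>(\<lambda>(t,l). \<alpha> i t l) q\<bar> \<le> A"
    using bound_from_cont[OF cpt2 aC fin] by blast
  have Ab: "\<bar>\<alpha> i t l\<bar> \<le> A" if "i\<in>{1..I}" "t\<in>{0..T}" "l\<in>{0..K}" for i t l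
    using A that by fastforce
  have A0: "A \<ge> 0" using Ab[OF I1, of 0 0] T K by fastforce
  have Asum: "(\<Sum>j=1..I. \<alpha> j t l) \<le> real I * A" if "t\<in>{0..T}" "l\<in>{0..K}" for t l
  proof -
    have "(\<Sum>j=1..I. \<alpha> j t l) \<le> of_nat (card {1..I}) * A"
      using Ab that by (intro sum_bounded_above) (auto simp: abs_le_iff)
    thus ?thesis by simp
  qed
  define lam where "lam = Cc + 1"
  define \<beta> where "\<beta> = B / K + real I * A + 1"
  have \<beta>K: "\<beta> * K \<ge> B" using K A0 B0 by (simp add: \<beta>_def distrib_right)
  have \<beta>A: "\<beta> > real I * A" proof -
    have "B / K \<ge> 0" using K B0 by simp
    thus ?thesis unfolding \<beta>_def by linarith
  qed
  have \<beta>0: "\<beta> > 0" using \<beta>A A0 by (smt (verit) mult_nonneg_nonneg of_nat_0_le_iff)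
  have lamc: "lam + c i t x l \<ge> 1" if "i\<in>{1..I}" "t\<in>{0..T}" "x\<in>{0..R}" "l\<in>{0..K}" for i t x l
    using Ccb[OF that] by (simp add: lam_def abs_le_iff)
  have key: "v i t x l \<le> u i t x l"
    if H: "0 < T'" "T' < T" "0 < l'" "l' < K" "i \<in> {1..I}" "0 \<le> t" "t \<le> T'" "0 \<le> x" "x \<le> R"
      "l' \<le> l" "l \<le> K" for T' l' i t x l
  proof (rule ccontr)
    assume "\<not> ?thesis"
    define w1 where "w1 = v i t x l - u i t x l"
    have w1: "w1 > 0" using \<open>\<not> _\<close> by (simp add: w1_def)
    define p where "p = (\<lambda>y m::real. y + \<beta> * (2 * K - m))"
    have pge: "p y m \<ge> \<beta> * K" if "0 \<le> y" "m \<le> K" for y m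
    proof -
      have "\<beta> * (K - m) \<ge> 0" using \<beta>0 that by simp
      thus ?thesis using that by (simp add: p_def algebra_simps)
    qed
    have ppos: "p y m > 0" if "0 \<le> y" "m \<le> K" for y m
      using pge[OF that] \<beta>0 K by (smt (verit) mult_pos_pos)
    define \<epsilon> where "\<epsilon> = exp (- lam * t) * w1 / (2 * p x l)"
    have \<epsilon>: "\<epsilon> > 0" using w1 ppos[of x l] H by (simp add: \<epsilon>_def)
    define Z where "Z = (\<lambda>j (q::real\<times>real\<times>real). exp (- lam * fst q) *
        (v j (fst q) (fst (snd q)) (snd (snd q)) - u j (fst q) (fst (snd q)) (snd (snd q)))
        - \<epsilon> * p (fst (snd q)) (snd (snd q)))"
    have Zs: "Z j (s, y, m) = exp (- lam * s) * (v j s y m - u j s y m) - \<epsilon> * (y + \<beta> * (2 * K - m))"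
      for j s y m by (simp add: Z_def p_def)
    define S where "S = {0..T'} \<times> {0..R} \<times> {l'..K}"
    have SB: "S \<subseteq> box3 T R K" using H by (auto simp: S_def box3_def)
    have Zc: "continuous_on S (Z j)" if "j \<in> {1..I}" for j
    proof -
      have "continuous_on S (\<lambda>(t,x,l). v j t x l)" using vC that SB continuous_on_subset by blast
      hence cv: "continuous_on S (\<lambda>q. v j (fst q) (fst (snd q)) (snd (snd q)))" by (simp add: split_beta)
      have "continuous_on S (\<lambda>(t,x,l). u j t x l)" using uC that SB continuous_on_subset by blast
      hence cu: "continuous_on S (\<lambda>q. u j (fst q) (fst (snd q)) (snd (snd q)))" by (simp add: split_beta)
      show ?thesis unfolding Z_def p_def by (intro continuous_intros cv cu)
    qed
    have cptS: "compact S" unfolding S_def by (intro compact_Times compact_Icc)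
    have inS: "(t, x, l) \<in> S" using H by (simp add: S_def)
    have cU: "compact (\<Union>j\<in>{1..I}. Z j ` S)"
      using fin by (rule compact_UN) (simp add: compact_continuous_image Zc cptS)
    have neU: "(\<Union>j\<in>{1..I}. Z j ` S) \<noteq> {}" using inS H by blast
    obtain mm where mm: "mm \<in> (\<Union>j\<in>{1..I}. Z j ` S)" "\<forall>y\<in>(\<Union>j\<in>{1..I}. Z j ` S). y \<le> mm"
      using compact_attains_sup[OF cU neU] by blast
    then obtain i0 q0 where i0: "i0 \<in> {1..I}" "q0 \<in> S" "mm = Z i0 q0" by blast
    obtain t0 x0 l0 where q0: "q0 = (t0, x0, l0)" by (cases q0) auto
    have max: "Z j q \<le> Z i0 (t0, x0, l0)" if "j \<in> {1..I}" "q \<in> S" for j q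
      using mm(2) i0 q0 that by blast
    have "Z i (t, x, l) > 0"
    proof -
      have "exp (- lam * t) * w1 > 0" using w1 by simp
      moreover have "\<epsilon> * p x l = exp (- lam * t) * w1 / 2" using ppos[of x l] H
        by (simp add: \<epsilon>_def)
      ultimately show ?thesis by (simp add: Z_def w1_def)
    qed
    hence m0: "Z i0 (t0, x0, l0) > 0" using max[OF H(5) inS] by simp
    have rg: "0 \<le> t0" "t0 \<le> T'" "0 \<le> x0" "x0 \<le> R" "l' \<le> l0" "l0 \<le> K"
      using i0(2) q0 by (auto simp: S_def)
    define E where "E = exp (- lam * t0)"
    have E0: "E > 0" by (simp add: E_def)
    define w0 where "w0 = v i0 t0 x0 l0 - u i0 t0 x0 l0"
    have Zw0: "Z i0 (t0, x0, l0) = E * w0 - \<epsilon> * p x0 l0" by (simp add: Z_def E_def w0_def)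
    have t0pos: "t0 > 0"
    proof (rule ccontr)
      assume "\<not> t0 > 0" hence t00: "t0 = 0" using rg by simp
      have "w0 \<le> 0" using init i0(1) rg H by (auto simp: w0_def t00)
      hence "E * w0 \<le> 0" using E0 by (simp add: mult_nonneg_nonpos)
      thus False using m0 Zw0 ppos[of x0 l0] rg \<epsilon> by (smt (verit) mult_pos_pos)
    qed
    have l0K: "l0 < K"
    proof (rule ccontr)
      assume "\<not> l0 < K" hence l0K: "l0 = K" using rg by simp
      have "w0 \<le> 0" using final i0(1) rg H by (auto simp: w0_def l0K)
      hence "E * w0 \<le> 0" using E0 by (simp add: mult_nonneg_nonpos)
      thus False using m0 Zw0 ppos[of x0 l0] rg \<epsilon> by (smt (verit) mult_pos_pos)
    qed
    have Ew0: "E * w0 > \<epsilon> * p x0 l0" using m0 Zw0 by simp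
    have w0pos: "w0 > 0" using Ew0 E0 ppos[of x0 l0] rg \<epsilon>
      by (smt (verit) mult_pos_pos zero_less_mult_pos)
    have t0T: "t0 \<in> {0<..<T}" "t0 \<in> {0..T}" using t0pos rg H by auto
    have l0o: "l0 \<in> {0<..<K}" "l0 \<in> {0..<K}" "l0 \<in> {0..K}" using l0K rg H by auto
    consider "x0 = 0" | "x0 = R" | "0 < x0 \<and> x0 < R" using rg by linarith
    then show False
    proof cases
      case 1
      have dx: "Dx (v j) R t0 0 l0 - Dx (u j) R t0 0 l0 \<le> \<epsilon> / E" if j: "j \<in> {1..I}" for j
      proof -
        have dv: "((\<lambda>y. v j t0 y l0) has_real_derivative Dx (v j) R t0 0 l0) (at 0 within {0..R})"
          using vDx j t0T l0o R by simp
        have du: "((\<lambda>y. u j t0 y l0) has_real_derivative Dx (u j) R t0 0 l0) (at 0 within {0..R})"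
          using uDx j t0T l0o R by simp
        have d: "((\<lambda>y. E * (v j t0 y l0 - u j t0 y l0) - \<epsilon> * (y + \<beta> * (2 * K - l0))) has_real_derivative
            E * (Dx (v j) R t0 0 l0 - Dx (u j) R t0 0 l0) - \<epsilon>) (at 0 within {0..R})"
          by (intro derivative_eq_intros dv du) (auto intro: dv du)
        have "E * (Dx (v j) R t0 0 l0 - Dx (u j) R t0 0 l0) - \<epsilon> \<le> 0"
        proof (rule deriv_right_max[OF d R])
          fix y assume y: "0 \<le> y" "y \<le> R"
          have "(t0, y, l0) \<in> S" using y rg by (simp add: S_def)
          hence "Z j (t0, y, l0) \<le> Z i0 (t0, 0, l0)" using max[OF j] 1 by simp
          moreover have "Z i0 (t0, 0, l0) = Z j (t0, 0, l0)"
          proof -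
            have "u i0 t0 0 l0 = u j t0 0 l0" using uJ i0(1) j t0T(2) l0o(3) by blast
            moreover have "v i0 t0 0 l0 = v j t0 0 l0" using vJ i0(1) j t0T(2) l0o(3) by blast
            ultimately show ?thesis by (simp add: Zs)
          qed
          ultimately show "E * (v j t0 y l0 - u j t0 y l0) - \<epsilon> * (y + \<beta> * (2 * K - l0))
              \<le> E * (v j t0 0 l0 - u j t0 0 l0) - \<epsilon> * (0 + \<beta> * (2 * K - l0))"
            by (simp add: Zs E_def)
        qed
        thus ?thesis using E0 by (simp add: pos_le_divide_eq mult.commute)
      qed
      have dl: "E * (Dl (v 1) K t0 0 l0 - Dl (u 1) K t0 0 l0) + \<epsilon> * \<beta> \<le> 0"
      proof -
        have "((\<lambda>m. v 1 t0 0 m) has_real_derivative Dl (v 1) K t0 0 l0) (at l0 within {0..K})"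
          using vDl t0T(2) l0o(2) by blast
        hence dv: "((\<lambda>m. v 1 t0 0 m) has_real_derivative Dl (v 1) K t0 0 l0) (at l0 within {l0..K})"
          by (rule has_field_derivative_subset) (use rg H in auto)
        have "((\<lambda>m. u 1 t0 0 m) has_real_derivative Dl (u 1) K t0 0 l0) (at l0 within {0..K})"
          using uDl t0T(2) l0o(2) by blast
        hence du: "((\<lambda>m. u 1 t0 0 m) has_real_derivative Dl (u 1) K t0 0 l0) (at l0 within {l0..K})"
          by (rule has_field_derivative_subset) (use rg H in auto)
        have d0: "((\<lambda>m. E * (v 1 t0 0 m - u 1 t0 0 m) - \<epsilon> * (0 + \<beta> * (2 * K - m))) has_real_derivative
            E * (Dl (v 1) K t0 0 l0 - Dl (u 1) K t0 0 l0) - \<epsilon> * (0 + \<beta> * (0 - 1))) (at l0 within {l0..K})"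
          by (intro DERIV_diff DERIV_cmult DERIV_add DERIV_const DERIV_ident dv du)
        have d: "((\<lambda>m. E * (v 1 t0 0 m - u 1 t0 0 m) - \<epsilon> * (0 + \<beta> * (2 * K - m))) has_real_derivative
            E * (Dl (v 1) K t0 0 l0 - Dl (u 1) K t0 0 l0) + \<epsilon> * \<beta>) (at l0 within {l0..K})"
          using d0 by simp
        show ?thesis
        proof (rule deriv_right_max[OF d l0K])
          fix m assume m: "l0 \<le> m" "m \<le> K"
          have "(t0, 0, m) \<in> S" using m rg by (simp add: S_def)
          hence "Z 1 (t0, 0, m) \<le> Z i0 (t0, 0, l0)" using max[OF I1] 1 by simp
          moreover have "Z i0 (t0, 0, l0) = Z 1 (t0, 0, l0)"
          proof -
            have "u i0 t0 0 l0 = u 1 t0 0 l0" using uJ i0(1) I1 t0T(2) l0o(3) by blast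
            moreover have "v i0 t0 0 l0 = v 1 t0 0 l0" using vJ i0(1) I1 t0T(2) l0o(3) by blast
            ultimately show ?thesis by (simp add: Zs)
          qed
          ultimately show "E * (v 1 t0 0 m - u 1 t0 0 m) - \<epsilon> * (0 + \<beta> * (2 * K - m))
              \<le> E * (v 1 t0 0 l0 - u 1 t0 0 l0) - \<epsilon> * (0 + \<beta> * (2 * K - l0))"
            by (simp add: Zs E_def)
        qed
      qed
      have w01: "v 1 t0 0 l0 - u 1 t0 0 l0 = w0"
      proof -
        have "u i0 t0 0 l0 = u 1 t0 0 l0" using uJ i0(1) I1 t0T(2) l0o(3) by blast
        moreover have "v i0 t0 0 l0 = v 1 t0 0 l0" using vJ i0(1) I1 t0T(2) l0o(3) by blast
        ultimately show ?thesis using 1 by (simp add: w0_def)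
      qed
      have J: "Dl (v 1) K t0 0 l0 - Dl (u 1) K t0 0 l0
          + (\<Sum>j=1..I. \<alpha> j t0 l0 * (Dx (v j) R t0 0 l0 - Dx (u j) R t0 0 l0))
          - r t0 l0 * w0 \<ge> 0"
      proof -
        have s: "(\<Sum>j=1..I. \<alpha> j t0 l0 * (Dx (v j) R t0 0 l0 - Dx (u j) R t0 0 l0))
           = (\<Sum>j=1..I. \<alpha> j t0 l0 * Dx (v j) R t0 0 l0) - (\<Sum>j=1..I. \<alpha> j t0 l0 * Dx (u j) R t0 0 l0)"
          by (simp add: right_diff_distrib sum_subtractf)
        have "r t0 l0 * w0 = r t0 l0 * v 1 t0 0 l0 - r t0 l0 * u 1 t0 0 l0"
          using w01 by (simp add: right_diff_distrib[symmetric])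
        moreover have "Dl (v 1) K t0 0 l0 + (\<Sum>i=1..I. \<alpha> i t0 l0 * Dx (v i) R t0 0 l0) - r t0 l0 * v 1 t0 0 l0 - \<phi> t0 l0 \<ge> 0"
          using v_junc t0T(1) l0o(1) by blast
        moreover have "Dl (u 1) K t0 0 l0 + (\<Sum>i=1..I. \<alpha> i t0 l0 * Dx (u i) R t0 0 l0) - r t0 l0 * u 1 t0 0 l0 - \<phi> t0 l0 \<le> 0"
          using u_junc t0T(1) l0o(1) by blast
        ultimately show ?thesis using s by linarith
      qed
      have rw: "r t0 l0 * w0 \<ge> 0" using r_nonneg t0T l0o w0pos by simp
      have "(\<Sum>j=1..I. \<alpha> j t0 l0 * (Dx (v j) R t0 0 l0 - Dx (u j) R t0 0 l0))
          \<le> (\<Sum>j=1..I. \<alpha> j t0 l0 * (\<epsilon> / E))"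
      proof (rule sum_mono)
        fix j assume j: "j \<in> {1..I}"
        have "\<alpha> j t0 l0 \<ge> 0" using \<alpha>_low j t0T l0o by (meson less_le_trans less_imp_le)
        thus "\<alpha> j t0 l0 * (Dx (v j) R t0 0 l0 - Dx (u j) R t0 0 l0) \<le> \<alpha> j t0 l0 * (\<epsilon> / E)"
          by (rule mult_left_mono[OF dx[OF j]])
      qed
      also have "\<dots> = (\<Sum>j=1..I. \<alpha> j t0 l0) * (\<epsilon> / E)" by (rule sum_distrib_right[symmetric])
      also have "\<dots> \<le> (real I * A) * (\<epsilon> / E)"
        using Asum[OF t0T(2) l0o(3)] \<epsilon> E0 by (intro mult_right_mono) auto
      finally have "Dl (v 1) K t0 0 l0 - Dl (u 1) K t0 0 l0 \<ge> - (real I * A * (\<epsilon> / E))"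
        using J rw by linarith
      hence "E * (Dl (v 1) K t0 0 l0 - Dl (u 1) K t0 0 l0) \<ge> E * (- (real I * A * (\<epsilon> / E)))"
        using E0 by (intro mult_left_mono) auto
      hence "E * (Dl (v 1) K t0 0 l0 - Dl (u 1) K t0 0 l0) \<ge> - (real I * A) * \<epsilon>"
        using E0 by simp
      hence "\<epsilon> * \<beta> \<le> \<epsilon> * (real I * A)" using dl by (simp add: algebra_simps)
      thus False using \<epsilon> \<beta>A by simp
    next
      case 2
      have dv: "((\<lambda>y. v i0 t0 y l0) has_real_derivative Dx (v i0) R t0 R l0) (at R within {0..R})"
        using vDx i0(1) t0T(2) l0o(2) R by simp
      have du: "((\<lambda>y. u i0 t0 y l0) has_real_derivative Dx (u i0) R t0 R l0) (at R within {0..R})"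
        using uDx i0(1) t0T(2) l0o(2) R by simp
      have d0: "((\<lambda>y. E * (v i0 t0 y l0 - u i0 t0 y l0) - \<epsilon> * (y + \<beta> * (2 * K - l0))) has_real_derivative
          E * (Dx (v i0) R t0 R l0 - Dx (u i0) R t0 R l0) - \<epsilon> * (1 + \<beta> * (0 - 0))) (at R within {0..R})"
        by (intro DERIV_diff DERIV_cmult DERIV_add DERIV_const DERIV_ident dv du)
      have "E * (Dx (v i0) R t0 R l0 - Dx (u i0) R t0 R l0) - \<epsilon> * (1 + \<beta> * (0 - 0)) \<ge> 0"
      proof (rule deriv_left_max[OF d0 R])
        fix y assume y: "0 \<le> y" "y \<le> R"
        have "(t0, y, l0) \<in> S" using y rg by (simp add: S_def)
        hence "Z i0 (t0, y, l0) \<le> Z i0 (t0, x0, l0)" using max[OF i0(1)] by simp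
        thus "E * (v i0 t0 y l0 - u i0 t0 y l0) - \<epsilon> * (y + \<beta> * (2 * K - l0))
            \<le> E * (v i0 t0 R l0 - u i0 t0 R l0) - \<epsilon> * (R + \<beta> * (2 * K - l0))"
          using 2 by (simp add: Zs E_def)
      qed
      moreover have "Dx (v i0) R t0 R l0 \<le> 0" using v_R i0(1) t0T(1) l0o(1) by blast
      moreover have "Dx (u i0) R t0 R l0 \<ge> 0" using u_R i0(1) t0T(1) l0o(1) by blast
      ultimately have "E * (Dx (v i0) R t0 R l0 - Dx (u i0) R t0 R l0) \<ge> \<epsilon>" by simp
      moreover have "E * (Dx (v i0) R t0 R l0 - Dx (u i0) R t0 R l0) \<le> 0"
        using E0 \<open>Dx (v i0) R t0 R l0 \<le> 0\<close> \<open>Dx (u i0) R t0 R l0 \<ge> 0\<close>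
        by (intro mult_nonneg_nonpos) auto
      ultimately show False using \<epsilon> by simp
    next
      case 3
      have x0o: "x0 \<in> {0<..<R}" using 3 by simp
      have x0c: "x0 \<in> {0..R}" using 3 by simp
      have dvt: "((\<lambda>s. v i0 s x0 l0) has_real_derivative Dt (v i0) T t0 x0 l0) (at t0)"
        using vDt i0(1) t0T(1) x0o l0o(1) by blast
      have dut: "((\<lambda>s. u i0 s x0 l0) has_real_derivative Dt (u i0) T t0 x0 l0) (at t0)"
        using uDt i0(1) t0T(1) x0o l0o(1) by blast
      have dt0: "((\<lambda>s. exp (- lam * s) * (v i0 s x0 l0 - u i0 s x0 l0) - \<epsilon> * (x0 + \<beta> * (2 * K - l0)))
          has_real_derivative (exp (- lam * t0) * (- lam * 1)) * (v i0 t0 x0 l0 - u i0 t0 x0 l0)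
            + exp (- lam * t0) * (Dt (v i0) T t0 x0 l0 - Dt (u i0) T t0 x0 l0) - 0) (at t0)"
      proof -
        have de: "((\<lambda>s. exp (- lam * s)) has_real_derivative exp (- lam * t0) * (- lam * 1)) (at t0)"
          by (rule DERIV_fun_exp) (rule DERIV_cmult[OF DERIV_ident])
        have dw: "((\<lambda>s. v i0 s x0 l0 - u i0 s x0 l0) has_real_derivative
            Dt (v i0) T t0 x0 l0 - Dt (u i0) T t0 x0 l0) (at t0)"
          by (rule DERIV_diff[OF dvt dut])
        show ?thesis using DERIV_diff[OF DERIV_mult'[OF de dw] DERIV_const[of "\<epsilon> * (x0 + \<beta> * (2 * K - l0))"]]
          by (simp add: algebra_simps)
      qed
      hence dt1: "((\<lambda>s. exp (- lam * s) * (v i0 s x0 l0 - u i0 s x0 l0) - \<epsilon> * (x0 + \<beta> * (2 * K - l0)))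
          has_real_derivative (exp (- lam * t0) * (- lam * 1)) * (v i0 t0 x0 l0 - u i0 t0 x0 l0)
            + exp (- lam * t0) * (Dt (v i0) T t0 x0 l0 - Dt (u i0) T t0 x0 l0) - 0) (at t0 within {0..t0})"
        by (rule has_field_derivative_at_within)
      have "(exp (- lam * t0) * (- lam * 1)) * (v i0 t0 x0 l0 - u i0 t0 x0 l0)
            + exp (- lam * t0) * (Dt (v i0) T t0 x0 l0 - Dt (u i0) T t0 x0 l0) - 0 \<ge> 0"
      proof (rule deriv_left_max[OF dt1 t0pos])
        fix s assume s: "0 \<le> s" "s \<le> t0"
        have "(s, x0, l0) \<in> S" using s rg by (simp add: S_def)
        hence "Z i0 (s, x0, l0) \<le> Z i0 (t0, x0, l0)" using max[OF i0(1)] by simp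
        thus "exp (- lam * s) * (v i0 s x0 l0 - u i0 s x0 l0) - \<epsilon> * (x0 + \<beta> * (2 * K - l0))
           \<le> exp (- lam * t0) * (v i0 t0 x0 l0 - u i0 t0 x0 l0) - \<epsilon> * (x0 + \<beta> * (2 * K - l0))"
          by (simp add: Zs)
      qed
      hence "E * (Dt (v i0) T t0 x0 l0 - Dt (u i0) T t0 x0 l0 - lam * w0) \<ge> 0"
        by (simp add: E_def w0_def algebra_simps)
      hence h1: "Dt (v i0) T t0 x0 l0 - Dt (u i0) T t0 x0 l0 \<ge> lam * w0"
        using E0 by (simp add: zero_le_mult_iff)
      define gx where "gx = (\<lambda>y. E * (v i0 t0 y l0 - u i0 t0 y l0) - \<epsilon> * (y + \<beta> * (2 * K - l0)))"
      define gx' where "gx' = (\<lambda>y. E * (Dx (v i0) R t0 y l0 - Dx (u i0) R t0 y l0) - \<epsilon>)"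
      have dgx: "(gx has_real_derivative gx' y) (at y)" if y: "0 < y" "y < R" for y
      proof -
        have "((\<lambda>y. v i0 t0 y l0) has_real_derivative Dx (v i0) R t0 y l0) (at y within {0..R})"
          using vDx i0(1) t0T(2) l0o(2) y by simp
        hence dv: "((\<lambda>y. v i0 t0 y l0) has_real_derivative Dx (v i0) R t0 y l0) (at y)"
          using at_within_Icc_at[OF y] by simp
        have "((\<lambda>y. u i0 t0 y l0) has_real_derivative Dx (u i0) R t0 y l0) (at y within {0..R})"
          using uDx i0(1) t0T(2) l0o(2) y by simp
        hence du: "((\<lambda>y. u i0 t0 y l0) has_real_derivative Dx (u i0) R t0 y l0) (at y)"
          using at_within_Icc_at[OF y] by simp
        have d0: "((\<lambda>y. E * (v i0 t0 y l0 - u i0 t0 y l0) - \<epsilon> * (y + \<beta> * (2 * K - l0))) has_real_derivative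
          E * (Dx (v i0) R t0 y l0 - Dx (u i0) R t0 y l0) - \<epsilon> * (1 + \<beta> * (0 - 0))) (at y)"
          by (intro DERIV_diff DERIV_cmult DERIV_add DERIV_const DERIV_ident dv du)
        thus ?thesis by (simp add: gx_def gx'_def)
      qed
      have dgx': "(gx' has_real_derivative E * (Dxx (v i0) R t0 x0 l0 - Dxx (u i0) R t0 x0 l0)) (at x0)"
      proof -
        have dv: "((\<lambda>y. Dx (v i0) R t0 y l0) has_real_derivative Dxx (v i0) R t0 x0 l0) (at x0)"
          using vDt i0(1) t0T(1) x0o l0o(1) by blast
        have du: "((\<lambda>y. Dx (u i0) R t0 y l0) has_real_derivative Dxx (u i0) R t0 x0 l0) (at x0)"
          using uDt i0(1) t0T(1) x0o l0o(1) by blast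
        have "(gx' has_real_derivative E * (Dxx (v i0) R t0 x0 l0 - Dxx (u i0) R t0 x0 l0) - 0) (at x0)"
          unfolding gx'_def by (intro DERIV_diff DERIV_cmult DERIV_const dv du)
        thus ?thesis by simp
      qed
      have gmax: "gx y \<le> gx x0" if y: "0 \<le> y" "y \<le> R" for y
      proof -
        have "(t0, y, l0) \<in> S" using y rg by (simp add: S_def)
        hence "Z i0 (t0, y, l0) \<le> Z i0 (t0, x0, l0)" using max[OF i0(1)] by simp
        thus ?thesis by (simp add: Zs gx_def E_def)
      qed
      have stat: "gx' x0 = 0"
      proof (rule DERIV_local_max[OF dgx[of x0]])
        show "0 < x0" "x0 < R" using 3 by auto
        show "0 < min x0 (R - x0)" using 3 by simp
        show "\<forall>y. \<bar>x0 - y\<bar> < min x0 (R - x0) \<longrightarrow> gx y \<le> gx x0"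
          using gmax by (auto simp: abs_less_iff)
      qed
      have "E * (Dxx (v i0) R t0 x0 l0 - Dxx (u i0) R t0 x0 l0) \<le> 0"
        by (rule second_deriv_max[of 0 x0 R gx gx']) (use 3 dgx dgx' stat gmax in auto)
      hence h2': "Dxx (v i0) R t0 x0 l0 - Dxx (u i0) R t0 x0 l0 \<le> 0"
        using E0 by (simp add: mult_le_0_iff)
      have h3': "Dx (v i0) R t0 x0 l0 - Dx (u i0) R t0 x0 l0 = \<epsilon> / E"
        using stat E0 by (simp add: gx'_def field_simps)
      have a0: "a i0 t0 x0 l0 > 0" using a_low i0(1) t0T(2) x0c l0o(3) by (meson less_le_trans)
      have h2: "a i0 t0 x0 l0 * (Dxx (v i0) R t0 x0 l0 - Dxx (u i0) R t0 x0 l0) \<le> 0"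
        using a0 h2' by (simp add: mult_nonneg_nonpos)
      have "- B \<le> b i0 t0 x0 l0" using Bb[OF i0(1) t0T(2) x0c l0o(3)] by (simp add: abs_le_iff)
      hence h3: "b i0 t0 x0 l0 * (Dx (v i0) R t0 x0 l0 - Dx (u i0) R t0 x0 l0) \<ge> - B * (\<epsilon> / E)"
        unfolding h3' using \<epsilon> E0 by (intro mult_right_mono) auto
      have "(lam + c i0 t0 x0 l0) * w0 \<ge> 1 * w0"
        using lamc[OF i0(1) t0T(2) x0c l0o(3)] w0pos by (intro mult_right_mono) auto
      hence h4: "lam * w0 + c i0 t0 x0 l0 * w0 \<ge> w0" by (simp add: algebra_simps)
      have "E * w0 > E * (p x0 l0 * (\<epsilon> / E))" using Ew0 E0 by (simp add: mult.commute)
      hence h5a: "w0 > p x0 l0 * (\<epsilon> / E)" using E0 by (simp add: pos_divide_less_eq mult.commute)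
      have "p x0 l0 \<ge> B" using pge[of x0 l0] rg \<beta>K by simp
      hence h5b: "p x0 l0 * (\<epsilon> / E) \<ge> B * (\<epsilon> / E)" using \<epsilon> E0 by (intro mult_right_mono) auto
      have pu: "Dt (u i0) T t0 x0 l0 - a i0 t0 x0 l0 * Dxx (u i0) R t0 x0 l0 + b i0 t0 x0 l0 * Dx (u i0) R t0 x0 l0
        + c i0 t0 x0 l0 * u i0 t0 x0 l0 - f i0 t0 x0 l0 \<ge> 0"
        using u_pde i0(1) t0T(1) x0o l0o(1) by blast
      have pv: "Dt (v i0) T t0 x0 l0 - a i0 t0 x0 l0 * Dxx (v i0) R t0 x0 l0 + b i0 t0 x0 l0 * Dx (v i0) R t0 x0 l0
        + c i0 t0 x0 l0 * v i0 t0 x0 l0 - f i0 t0 x0 l0 \<le> 0"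
        using v_pde i0(1) t0T(1) x0o l0o(1) by blast
      have e1: "a i0 t0 x0 l0 * (Dxx (v i0) R t0 x0 l0 - Dxx (u i0) R t0 x0 l0)
          = a i0 t0 x0 l0 * Dxx (v i0) R t0 x0 l0 - a i0 t0 x0 l0 * Dxx (u i0) R t0 x0 l0"
        by (simp add: right_diff_distrib)
      have e2: "b i0 t0 x0 l0 * (Dx (v i0) R t0 x0 l0 - Dx (u i0) R t0 x0 l0)
          = b i0 t0 x0 l0 * Dx (v i0) R t0 x0 l0 - b i0 t0 x0 l0 * Dx (u i0) R t0 x0 l0"
        by (simp add: right_diff_distrib)
      have e3: "c i0 t0 x0 l0 * w0 = c i0 t0 x0 l0 * v i0 t0 x0 l0 - c i0 t0 x0 l0 * u i0 t0 x0 l0"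
        by (simp add: w0_def right_diff_distrib)
      show False using pu pv e1 e2 e3 h1 h2 h3 h4 h5a h5b by linarith
    qed
  qed
  have c0: "(\<lambda>n. a / (real n + 2)) \<longlonglongrightarrow> 0" for a :: real
  proof -
    have "(\<lambda>n. a / of_nat (n + 2)) \<longlonglongrightarrow> (0::real)"
      by (rule LIMSEQ_ignore_initial_segment[OF lim_const_over_n])
    thus ?thesis by (simp add: add.commute)
  qed
  have dle: "a / (real n + 2) \<le> a" if "0 \<le> a" for a :: real and n :: nat
  proof -
    have "a * 1 \<le> a * (real n + 2)" using that by (intro mult_left_mono) auto
    thus ?thesis by (simp add: divide_le_eq)
  qed
  show ?thesis
  proof (intro ballI)
    fix i t x l assume i: "i \<in> {1..I}" and t: "t \<in> {0..T}" and x: "x \<in> {0..R}" and l: "l \<in> {0..K}"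
    define tn where "tn = (\<lambda>n::nat. t - t / (real n + 2))"
    define ln where "ln = (\<lambda>n::nat. l + (K - l) / (real n + 2))"
    have seq_le: "v i (tn n) x (ln n) - u i (tn n) x (ln n) \<le> 0" for n
    proof -
      have n2: "real n + 2 \<ge> 2" by simp
      have q1: "t / (real n + 2) \<le> t" using t by (intro dle) simp
      have q1': "t / (real n + 2) \<ge> 0" using t by simp
      have tn0: "0 \<le> tn n" using q1 by (simp add: tn_def)
      have tnT: "tn n < T"
      proof (cases "t = 0")
        case True thus ?thesis using T by (simp add: tn_def)
      next
        case False
        hence "t / (real n + 2) > 0" using t by simp
        thus ?thesis using t by (simp add: tn_def)
      qed
      have q2: "(K - l) / (real n + 2) \<le> K - l" using l by (intro dle) simp
      have q2': "(K - l) / (real n + 2) \<ge> 0" using l by simp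
      have lnK: "ln n \<le> K" "l \<le> ln n" using q2 q2' by (auto simp: ln_def)
      have ln0: "ln n > 0"
      proof (cases "l = 0")
        case True thus ?thesis using K by (simp add: ln_def)
      next
        case False hence "l > 0" using l by simp
        thus ?thesis using q2' unfolding ln_def by linarith
      qed
      have "v i (tn n) x (ln n) \<le> u i (tn n) x (ln n)"
        by (rule key[of "(tn n + T) / 2" "ln n / 2"]) (use tn0 tnT lnK ln0 i x K in auto)
      thus ?thesis by simp
    qed
    have lim: "(\<lambda>n. (tn n, x, ln n)) \<longlonglongrightarrow> (t, x, l)"
    proof -
      have "tn \<longlonglongrightarrow> t - 0" unfolding tn_def by (intro tendsto_intros c0)
      moreover have "ln \<longlonglongrightarrow> l + 0" unfolding ln_def by (intro tendsto_intros c0)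
      ultimately show ?thesis by (auto intro!: tendsto_Pair)
    qed
    have inb: "(tn n, x, ln n) \<in> box3 T R K" for n
    proof -
      have n2: "real n + 2 \<ge> 2" by simp
      have "t / (real n + 2) \<le> t" "t / (real n + 2) \<ge> 0" using t dle[of t n] by simp_all
      moreover have "(K - l) / (real n + 2) \<le> K - l" "(K - l) / (real n + 2) \<ge> 0"
        using l dle[of "K - l" n] by simp_all
      ultimately show ?thesis using t x l by (auto simp: box3_def tn_def ln_def)
    qed
    have cont: "continuous_on (box3 T R K) (\<lambda>q. (\<lambda>(t,x,l). v i t x l) q - (\<lambda>(t,x,l). u i t x l) q)"
      using vC uC i by (intro continuous_intros) auto
    have "((\<lambda>n. (\<lambda>q. (\<lambda>(t,x,l). v i t x l) q - (\<lambda>(t,x,l). u i t x l) q) (tn n, x, ln n))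
        \<longlonglongrightarrow> (\<lambda>q. (\<lambda>(t,x,l). v i t x l) q - (\<lambda>(t,x,l). u i t x l) q) (t, x, l))"
      by (rule continuous_on_tendsto_compose[OF cont lim]) (use t x l inb in \<open>auto simp: box3_def\<close>)
    hence "(\<lambda>n. v i (tn n) x (ln n) - u i (tn n) x (ln n)) \<longlonglongrightarrow> v i t x l - u i t x l" by simp
    hence "v i t x l - u i t x l \<le> 0" by (rule LIMSEQ_le_const2) (use seq_le in auto)
    thus "v i t x l \<le> u i t x l" by simp
  qed
qed

end
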